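(* There is a constant $C$ such that for every sufficiently large $n$ there exists a $1$-planar graph of girth $5$ on $n$ vertices with at least $\left(2+\frac{1}{6}\right)n-C$ edges.
   Context: All graphs are finite and simple. A graph is $k$-planar if it admits a drawing in the plane in which every edge is crossed at most $k$ times. The girth of a graph is the length of its shortest cycle. (The paper states the edge count as $(2+\frac16)n-O(1)$.) *)

theory Defs
  imports "HOL-Analysis.Analysis" "HOL-Library.Extended_Nat"
begin

definition simple_graph :: "'a set \<Rightarrow> 'a set set \<Rightarrow> bool" where
  "simple_graph V E \<longleftrightarrow> finite V \<and>
     (\<forall>e\<in>E. \<exists>u v. e = {u, v} \<and> u \<in> V \<and> v \<in> V \<and> u \<noteq> v)"

definition has_cycle_of_length :: "'a set \<Rightarrow> 'a set set \<Rightarrow> nat \<Rightarrow> bool" where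
  "has_cycle_of_length V E k \<longleftrightarrow> k \<ge> 3 \<and>
     (\<exists>xs. length xs = k \<and> distinct xs \<and> set xs \<subseteq> V \<and>
          (\<forall>i<k. {xs ! i, xs ! ((i + 1) mod k)} \<in> E))"

text \<open>Girth: length of a shortest cycle (infinity if acyclic).\<close>
definition girth :: "'a set \<Rightarrow> 'a set set \<Rightarrow> enat" where
  "girth V E = (INF k\<in>{k. has_cycle_of_length V E k}. enat k)"

definition k_planar :: "nat \<Rightarrow> 'a set \<Rightarrow> 'a set set \<Rightarrow> bool" where
  "k_planar k V E \<longleftrightarrow>
    (\<exists>(pos :: 'a \<Rightarrow> real \<times> real) (\<gamma> :: 'a set \<Rightarrow> real \<Rightarrow> real \<times> real).
       inj_on pos V \<and>
       (\<forall>e\<in>E. arc (\<gamma> e) \<and> {pathstart (\<gamma> e), pathfinish (\<gamma> e)} = pos ` e \<and>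
                path_image (\<gamma> e) \<inter> pos ` V = pos ` e) \<and>
       (\<forall>e\<in>E. finite {(f, p). f \<in> E \<and> f \<noteq> e \<and>
                   p \<in> path_image (\<gamma> e) \<inter> path_image (\<gamma> f) \<and> p \<notin> pos ` V} \<and>
               card {(f, p). f \<in> E \<and> f \<noteq> e \<and>
                   p \<in> path_image (\<gamma> e) \<inter> path_image (\<gamma> f) \<and> p \<notin> pos ` V} \<le> k))"

end

theory Submission
  imports Defs
begin


definition crR :: "real \<times> real \<Rightarrow> real \<times> real \<Rightarrow> real" where
  "crR u v = fst u * snd v - snd u * fst v"

lemma seg_param:
  fixes a b x :: "real \<times> real"
  assumes "x \<in> closed_segment a b"
  obtains u where "0 \<le> u" "u \<le> 1" "fst x = (1-u)* fst a + u* fst b" "snd x = (1-u)* snd a + u* snd b"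
proof -
  from assms obtain u where "0 \<le> u" "u \<le> 1" "x = (1-u) *\<^sub>R a + u *\<^sub>R b"
    by (auto simp: in_segment)
  then show ?thesis using that[of u] by (simp add: real_scaleR_def)
qed

lemma cr_on_seg:
  assumes "x \<in> closed_segment a b"
  shows "crR (b - a) (x - a) = 0"
proof -
  obtain u where u: "fst x = (1-u) * fst a + u * fst b" "snd x = (1-u) * snd a + u * snd b"
    using seg_param[OF assms] by metis
  have d: "fst x - fst a = u * (fst b - fst a)" "snd x - snd a = u * (snd b - snd a)"
    using u by (simp_all add: algebra_simps)
  show ?thesis unfolding crR_def fst_diff snd_diff d by (simp add: algebra_simps)
qed

lemma cr_seg_pos:
  assumes "x \<in> closed_segment p q" "crR w (p - a) > 0" "crR w (q - a) > 0"
  shows "crR w (x - a) > 0"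
proof -
  obtain u where u: "0 \<le> u" "u \<le> 1" "fst x = (1-u)* fst p + u* fst q" "snd x = (1-u)* snd p + u* snd q"
    using seg_param[OF assms(1)] by metis
  have "crR w (x - a) = (1-u) * crR w (p - a) + u * crR w (q - a)"
    by (simp add: crR_def u(3,4) algebra_simps)
  moreover have "(1-u) * crR w (p - a) \<ge> 0" "u * crR w (q - a) \<ge> 0"
    using u assms by auto
  moreover have "(1-u) * crR w (p - a) > 0 \<or> u * crR w (q - a) > 0"
    using u assms by (cases "u = 1") auto
  ultimately show ?thesis by linarith
qed

lemma cr_seg_neg:
  assumes "x \<in> closed_segment p q" "crR w (p - a) < 0" "crR w (q - a) < 0"
  shows "crR w (x - a) < 0"
proof -
  obtain u where u: "0 \<le> u" "u \<le> 1" "fst x = (1-u)* fst p + u* fst q" "snd x = (1-u)* snd p + u* snd q"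
    using seg_param[OF assms(1)] by metis
  have "crR w (x - a) = (1-u) * crR w (p - a) + u * crR w (q - a)"
    by (simp add: crR_def u(3,4) algebra_simps)
  moreover have "(1-u) * crR w (p - a) \<le> 0" "u * crR w (q - a) \<le> 0"
    using u assms by (auto simp: mult_nonneg_nonpos)
  moreover have "(1-u) * crR w (p - a) < 0 \<or> u * crR w (q - a) < 0"
    using u assms by (cases "u = 1") (auto simp: mult_pos_neg)
  ultimately show ?thesis by linarith
qed

definition sepD :: "real\<times>real \<Rightarrow> real\<times>real \<Rightarrow> real\<times>real \<Rightarrow> real\<times>real \<Rightarrow> bool" where
  "sepD a b p q \<longleftrightarrow> (crR (b - a) (p - a) > 0 \<and> crR (b - a) (q - a) > 0) \<or>
                      (crR (b - a) (p - a) < 0 \<and> crR (b - a) (q - a) < 0)"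

lemma sepD_disj:
  assumes "sepD a b p q"
  shows "closed_segment a b \<inter> closed_segment p q = {}"
proof (rule ccontr)
  assume "closed_segment a b \<inter> closed_segment p q \<noteq> {}"
  then obtain x where x: "x \<in> closed_segment a b" "x \<in> closed_segment p q" by blast
  have "crR (b - a) (x - a) = 0" using cr_on_seg[OF x(1)] .
  moreover have "crR (b - a) (x - a) \<noteq> 0"
  proof (cases "crR (b - a) (p - a) > 0 \<and> crR (b - a) (q - a) > 0")
    case True
    then show ?thesis using cr_seg_pos[OF x(2)] by fastforce
  next
    case False
    then have "crR (b - a) (p - a) < 0 \<and> crR (b - a) (q - a) < 0" using assms unfolding sepD_def by blast
    then show ?thesis using cr_seg_neg[OF x(2)] by fastforce
  qed
  ultimately show False by simp
qed

lemma touch_lemma: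
  assumes "crR (b - a) (q - a) \<noteq> 0"
  shows "closed_segment a b \<inter> closed_segment a q \<subseteq> {a}"
proof
  fix x assume x: "x \<in> closed_segment a b \<inter> closed_segment a q"
  obtain s where s: "0 \<le> s" "s \<le> 1" "fst x = (1-s)* fst a + s* fst b" "snd x = (1-s)* snd a + s* snd b"
    using seg_param x by blast
  obtain u where u: "0 \<le> u" "u \<le> 1" "fst x = (1-u)* fst a + u* fst q" "snd x = (1-u)* snd a + u* snd q"
    using seg_param x by blast
  have e1: "s * (fst b - fst a) = u * (fst q - fst a)" "s * (snd b - snd a) = u * (snd q - snd a)"
    using s(3,4) u(3,4) by (simp_all add: algebra_simps)
  have "s * crR (b - a) (q - a) = 0"
  proof -
    have "s * crR (b - a) (q - a) = (s * (fst b - fst a)) * (snd q - snd a) - (s * (snd b - snd a)) * (fst q - fst a)"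
      by (simp add: crR_def algebra_simps)
    also have "\<dots> = (u * (fst q - fst a)) * (snd q - snd a) - (u * (snd q - snd a)) * (fst q - fst a)"
      using e1 by simp
    also have "\<dots> = 0" by (simp add: algebra_simps)
    finally show ?thesis .
  qed
  then have "s = 0" using assms by simp
  then have "x = a" using s by (simp add: prod_eq_iff)
  then show "x \<in> {a}" by simp
qed

lemma cross_lemma:
  assumes "crR (b - a) (q - p) \<noteq> 0"
    and "x \<in> closed_segment a b" "x \<in> closed_segment p q"
    and "y \<in> closed_segment a b" "y \<in> closed_segment p q"
  shows "x = y"
proof -
  obtain s where s: "fst x = (1-s)* fst a + s* fst b" "snd x = (1-s)* snd a + s* snd b"
    using seg_param assms(2) by metis
  obtain s' where s': "fst y = (1-s')* fst a + s'* fst b" "snd y = (1-s')* snd a + s'* snd b"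
    using seg_param assms(4) by metis
  obtain u where u: "fst x = (1-u)* fst p + u* fst q" "snd x = (1-u)* snd p + u* snd q"
    using seg_param assms(3) by metis
  obtain u' where u': "fst y = (1-u')* fst p + u'* fst q" "snd y = (1-u')* snd p + u'* snd q"
    using seg_param assms(5) by metis
  have e1: "(s - s') * (fst b - fst a) = (u - u') * (fst q - fst p)"
    "(s - s') * (snd b - snd a) = (u - u') * (snd q - snd p)"
    using s s' u u' by (simp_all add: algebra_simps)
  have "(s - s') * crR (b - a) (q - p) = 0"
  proof -
    have "(s - s') * crR (b - a) (q - p) = ((s - s') * (fst b - fst a)) * (snd q - snd p) - ((s - s') * (snd b - snd a)) * (fst q - fst p)"
      by (simp add: crR_def algebra_simps)
    also have "\<dots> = ((u - u') * (fst q - fst p)) * (snd q - snd p) - ((u - u') * (snd q - snd p)) * (fst q - fst p)"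
      using e1 by simp
    also have "\<dots> = 0" by (simp add: algebra_simps)
    finally show ?thesis .
  qed
  then have "s = s'" using assms by simp
  then show ?thesis using s s' by (simp add: prod_eq_iff)
qed


fun gm :: "int \<times> int \<Rightarrow> int \<times> int \<Rightarrow> int \<times> int" where
  "gm (a,b) (c,d) = (a*c - b*d, a*d + b*c)"

fun cpw :: "nat \<Rightarrow> int \<times> int" where
  "cpw 0 = (1,0)"
| "cpw (Suc q) = gm (3,-3) (cpw q)"

definition Bv :: "nat \<Rightarrow> int \<times> int" where
  "Bv r = (if r = 0 then (1,0) else if r = 1 then (1,-1) else if r = 2 then (-1,0)
           else if r = 3 then (-2,1) else if r = 4 then (0,2) else (3,3))"

definition PI :: "nat \<Rightarrow> int \<times> int" where
  "PI t = gm (cpw (t div 6)) (Bv (t mod 6))"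

definition okd :: "nat \<Rightarrow> nat \<Rightarrow> bool" where
  "okd t d \<longleftrightarrow> d = 1 \<or> (d = 5 \<and> even t) \<or> (d = 10 \<and> (t mod 6 = 0 \<or> t mod 6 = 3))
     \<or> (d = 11 \<and> t mod 6 = 1) \<or> (d = 9 \<and> t mod 6 = 5)"

definition X0 :: "nat \<times> nat \<Rightarrow> nat \<times> nat \<Rightarrow> bool" where
  "X0 e f \<longleftrightarrow> snd f = 1 \<and>
     ((snd e = 10 \<and> fst e mod 6 = 0 \<and> fst f = fst e + 5) \<or>
      (snd e = 11 \<and> fst e mod 6 = 1 \<and> fst f = fst e + 5) \<or>
      (snd e = 10 \<and> fst e mod 6 = 3 \<and> fst f = fst e + 4) \<or>
      (snd e = 9 \<and> fst e mod 6 = 5 \<and> fst f = fst e + 4))"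

definition XR :: "nat \<times> nat \<Rightarrow> nat \<times> nat \<Rightarrow> bool" where
  "XR e f \<longleftrightarrow> X0 e f \<or> X0 f e"

definition oI :: "int \<times> int \<Rightarrow> int \<times> int \<Rightarrow> int \<times> int \<Rightarrow> int" where
  "oI a b c = (fst b - fst a) * (snd c - snd a) - (snd b - snd a) * (fst c - fst a)"

definition dI :: "int \<times> int \<Rightarrow> int \<times> int \<Rightarrow> int \<times> int \<Rightarrow> int" where
  "dI a b c = (fst c - fst a) * (fst b - fst a) + (snd c - snd a) * (snd b - snd a)"

definition sepI :: "int \<times> int \<Rightarrow> int \<times> int \<Rightarrow> int \<times> int \<Rightarrow> int \<times> int \<Rightarrow> bool" where
  "sepI a b p q \<longleftrightarrow> (oI a b p > 0 \<and> oI a b q > 0) \<or> (oI a b p < 0 \<and> oI a b q < 0)"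

definition touchI :: "int \<times> int \<Rightarrow> int \<times> int \<Rightarrow> int \<times> int \<Rightarrow> int \<times> int \<Rightarrow> bool" where
  "touchI a b p q \<longleftrightarrow> (a = p \<and> oI a b q \<noteq> 0) \<or> (a = q \<and> oI a b p \<noteq> 0) \<or>
                      (b = p \<and> oI b a q \<noteq> 0) \<or> (b = q \<and> oI b a p \<noteq> 0)"

definition goodF :: "int \<times> int \<Rightarrow> int \<times> int \<Rightarrow> int \<times> int \<Rightarrow> int \<times> int \<Rightarrow> bool \<Rightarrow> bool" where
  "goodF a b p q X = (if sepI a b p q then True else if sepI p q a b then True
      else if touchI a b p q then True else (oI a b q \<noteq> oI a b p \<and> X))"

definition notOnI :: "int \<times> int \<Rightarrow> int \<times> int \<Rightarrow> int \<times> int \<Rightarrow> bool" where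
  "notOnI p a b \<longleftrightarrow> (if oI a b p \<noteq> 0 then True else dI a b p < 0 \<or> dI b a p < 0)"

definition NI :: "int \<times> int \<Rightarrow> int" where
  "NI z = fst z ^ 2 + snd z ^ 2"

definition cI :: "int \<times> int \<Rightarrow> int \<times> int \<Rightarrow> int" where
  "cI a b = fst a * snd b - snd a * fst b"

definition T13 :: "(nat \<times> nat) set" where
  "T13 = {(0,1),(0,5),(0,10),(1,1),(1,11),(2,1),(2,5),(3,1),(3,10),(4,1),(4,5),(5,1),(5,9)}"

definition T39 :: "(nat \<times> nat) set" where
  "T39 = {(0,1),(0,5),(0,10),(1,1),(1,11),(2,1),(2,5),(3,1),(3,10),(4,1),(4,5),(5,1),(5,9),(6,1),(6,5),(6,10),(7,1),(7,11),(8,1),(8,5),(9,1),(9,10),(10,1),(10,5),(11,1),(11,9),(12,1),(12,5),(12,10),(13,1),(13,11),(14,1),(14,5),(15,1),(15,10),(16,1),(16,5),(17,1),(17,9)}"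

lemma cpw_1[simp]: "cpw 1 = (3,-3)" by (simp add: One_nat_def)
lemma cpw_numeral[simp]: "cpw (numeral k) = gm (3,-3) (cpw (pred_numeral k))"
  by (simp add: numeral_eq_Suc)

lemma PI_S0[simp]: "PI (Suc 0) = (1,-1)" by (simp add: PI_def Bv_def)
lemma PI_SS0[simp]: "PI (Suc (Suc 0)) = (-1,0)" by (simp add: PI_def Bv_def)
lemma PI_0[simp]: "PI 0 = (1,0)" by (simp add: PI_def Bv_def)
lemma PI_1[simp]: "PI 1 = (1,-1)" by (simp add: PI_def Bv_def)
lemma PI_2[simp]: "PI 2 = (-1,0)" by (simp add: PI_def Bv_def)
lemma PI_3[simp]: "PI 3 = (-2,1)" by (simp add: PI_def Bv_def)
lemma PI_4[simp]: "PI 4 = (0,2)" by (simp add: PI_def Bv_def)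
lemma PI_5[simp]: "PI 5 = (3,3)" by (simp add: PI_def Bv_def)
lemma PI_6[simp]: "PI 6 = (3,-3)" by (simp add: PI_def Bv_def)
lemma PI_7[simp]: "PI 7 = (0,-6)" by (simp add: PI_def Bv_def)
lemma PI_8[simp]: "PI 8 = (-3,3)" by (simp add: PI_def Bv_def)
lemma PI_9[simp]: "PI 9 = (-3,9)" by (simp add: PI_def Bv_def)
lemma PI_10[simp]: "PI 10 = (6,6)" by (simp add: PI_def Bv_def)
lemma PI_11[simp]: "PI 11 = (18,0)" by (simp add: PI_def Bv_def)
lemma PI_12[simp]: "PI 12 = (0,-18)" by (simp add: PI_def Bv_def)
lemma PI_13[simp]: "PI 13 = (-18,-18)" by (simp add: PI_def Bv_def)
lemma PI_14[simp]: "PI 14 = (0,18)" by (simp add: PI_def Bv_def)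
lemma PI_15[simp]: "PI 15 = (18,36)" by (simp add: PI_def Bv_def)
lemma PI_16[simp]: "PI 16 = (36,0)" by (simp add: PI_def Bv_def)
lemma PI_17[simp]: "PI 17 = (54,-54)" by (simp add: PI_def Bv_def)
lemma PI_18[simp]: "PI 18 = (-54,-54)" by (simp add: PI_def Bv_def)
lemma PI_19[simp]: "PI 19 = (-108,0)" by (simp add: PI_def Bv_def)
lemma PI_20[simp]: "PI 20 = (54,54)" by (simp add: PI_def Bv_def)
lemma PI_21[simp]: "PI 21 = (162,54)" by (simp add: PI_def Bv_def)
lemma PI_22[simp]: "PI 22 = (108,-108)" by (simp add: PI_def Bv_def)
lemma PI_23[simp]: "PI 23 = (0,-324)" by (simp add: PI_def Bv_def)
lemma PI_24[simp]: "PI 24 = (-324,0)" by (simp add: PI_def Bv_def)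
lemma PI_25[simp]: "PI 25 = (-324,324)" by (simp add: PI_def Bv_def)
lemma PI_26[simp]: "PI 26 = (324,0)" by (simp add: PI_def Bv_def)
lemma PI_27[simp]: "PI 27 = (648,-324)" by (simp add: PI_def Bv_def)
lemma PI_28[simp]: "PI 28 = (0,-648)" by (simp add: PI_def Bv_def)
lemma PI_29[simp]: "PI 29 = (-972,-972)" by (simp add: PI_def Bv_def)

lemma fc_pairs:
  "\<forall>e\<in>T13. \<forall>f\<in>T39. e \<noteq> f \<longrightarrow>
     goodF (PI (fst e)) (PI (fst e + snd e)) (PI (fst f)) (PI (fst f + snd f)) (XR e f)"
  unfolding T13_def T39_def by (simp add: goodF_def sepI_def touchI_def oI_def XR_def X0_def)

lemma fc_vert1:
  "\<forall>v\<in>{0,1,2,3,4,5,6,7,8,9,10,11,12,13,14,15,16,17::nat}. \<forall>f\<in>T13. v \<noteq> fst f \<longrightarrow> v \<noteq> fst f + snd f \<longrightarrow>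
     notOnI (PI v) (PI (fst f)) (PI (fst f + snd f))"
  unfolding T13_def by (simp add: notOnI_def oI_def dI_def)

lemma fc_vert2:
  "\<forall>v\<in>{0,1,2,3,4,5::nat}. \<forall>f\<in>T39. v \<noteq> fst f \<longrightarrow> v \<noteq> fst f + snd f \<longrightarrow>
     notOnI (PI v) (PI (fst f)) (PI (fst f + snd f))"
  unfolding T39_def by (simp add: notOnI_def oI_def dI_def)

lemma fc_inj:
  "\<forall>v\<in>{0,1,2,3,4,5::nat}. \<forall>w\<in>{0,1,2,3,4,5,6,7,8,9,10,11,12,13,14,15,16,17::nat}. v \<noteq> w \<longrightarrow> PI v \<noteq> PI w"
  by simp

lemma fc_norm:
  "\<forall>f\<in>T13. NI (PI (fst f)) \<le> 648 \<and> NI (PI (fst f + snd f)) \<le> 648 \<and>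
     1 \<le> NI (fst (PI (fst f + snd f)) - fst (PI (fst f)), snd (PI (fst f + snd f)) - snd (PI (fst f))) \<and>
     NI (fst (PI (fst f + snd f)) - fst (PI (fst f)), snd (PI (fst f + snd f)) - snd (PI (fst f)))
       \<le> 5 * (cI (PI (fst f)) (PI (fst f + snd f)))^2"
  unfolding T13_def by (simp add: NI_def cI_def)

lemma fc_B:
  "\<forall>r\<in>{0,1,2,3,4,5::nat}. 1 \<le> NI (Bv r) \<and> NI (Bv r) \<le> 18"
  by (simp add: NI_def Bv_def)


definition toR :: "int \<times> int \<Rightarrow> real \<times> real" where
  "toR z = (of_int (fst z), of_int (snd z))"

definition mulR :: "int \<times> int \<Rightarrow> real \<times> real \<Rightarrow> real \<times> real" where
  "mulR z p = (of_int (fst z) * fst p - of_int (snd z) * snd p, of_int (fst z) * snd p + of_int (snd z) * fst p)"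

definition pos :: "nat \<Rightarrow> real \<times> real" where
  "pos t = toR (PI t)"

definition NR :: "real \<times> real \<Rightarrow> real" where
  "NR p = fst p ^ 2 + snd p ^ 2"

definition seg :: "nat \<Rightarrow> nat \<Rightarrow> (real \<times> real) set" where
  "seg t d = closed_segment (pos t) (pos (t + d))"

lemma gm_assoc: "gm (gm a b) c = gm a (gm b c)"
  by (cases a; cases b; cases c) (simp add: algebra_simps)

lemma gm_one: "gm (1,0) z = z"
  by (cases z) simp

lemma cpw_add: "cpw (m + k) = gm (cpw m) (cpw k)"
  by (induction m) (auto simp: gm_assoc gm_one)

lemma PI_shift: "PI (6*q + s) = gm (cpw q) (PI s)"
proof -
  have "(6*q + s) div 6 = q + s div 6" "(6*q + s) mod 6 = s mod 6" by auto
  then show ?thesis by (simp add: PI_def cpw_add gm_assoc)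
qed

lemma PI_small: "r < 6 \<Longrightarrow> PI r = Bv r"
  by (simp add: PI_def gm_one)

lemma toR_gm: "toR (gm z w) = mulR z (toR w)"
  by (cases z; cases w) (simp add: toR_def mulR_def algebra_simps)

lemma pos_shift: "pos (6*q + s) = mulR (cpw q) (pos s)"
  by (simp add: pos_def PI_shift toR_gm)

lemma linear_mulR: "linear (mulR z)"
  by (rule linearI) (auto simp: mulR_def algebra_simps)

lemma NR_mulR: "NR (mulR z p) = of_int (NI z) * NR p"
  by (simp add: NR_def mulR_def NI_def power2_eq_square algebra_simps)

lemma NI_gm: "NI (gm a b) = NI a * NI b"
  by (cases a; cases b) (simp add: NI_def power2_eq_square algebra_simps)

lemma NI_cpw: "NI (cpw q) = 18 ^ q"
proof (induction q)
  case 0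
  then show ?case by (simp add: NI_def)
next
  case (Suc q)
  have "NI (cpw (Suc q)) = NI (3,-3) * NI (cpw q)" by (simp add: NI_gm)
  also have "NI (3,-3) = 18" by (simp add: NI_def)
  finally show ?case using Suc by simp
qed

lemma NR_toR: "NR (toR z) = of_int (NI z)"
  by (simp add: NR_def toR_def NI_def)

lemma mulR_diff: "mulR z p - mulR z p' = mulR z (p - p')"
  by (simp add: mulR_def algebra_simps)

lemma NR_zero: "NR p = 0 \<Longrightarrow> p = 0"
  by (simp add: NR_def prod_eq_iff)

lemma mulR_inj: assumes "NI z \<noteq> 0" shows "inj (mulR z)"
proof (rule injI)
  fix p p' assume "mulR z p = mulR z p'"
  then have "NR (mulR z (p - p')) = 0" by (simp add: mulR_diff[symmetric] NR_def)
  then have "NR (p - p') = 0" using assms by (simp add: NR_mulR)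
  then show "p = p'" using NR_zero[of "p - p'"] by simp
qed

lemma cpw_inj: "inj (mulR (cpw q))"
  by (rule mulR_inj) (simp add: NI_cpw)

lemma seg_shift: "closed_segment (pos (6*q+s)) (pos (6*q+s')) = mulR (cpw q) ` closed_segment (pos s) (pos s')"
  by (simp add: pos_shift closed_segment_linear_image[OF linear_mulR])

lemma okd_shift: "okd (6*q + s) d = okd s d"
proof -
  have "(6*q + s) mod 6 = s mod 6" by auto
  moreover have "even (6*q + s) = even s" by auto
  ultimately show ?thesis unfolding okd_def by simp
qed

lemma XR_shift: "XR (6*q + r, d) (6*q + s, d') = XR (r, d) (s, d')"
proof -
  have "(6*q + r) mod 6 = r mod 6" "(6*q + s) mod 6 = s mod 6" by auto
  then show ?thesis unfolding XR_def X0_def by auto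
qed

lemma XR_sym: "XR e f = XR f e"
  unfolding XR_def by auto

definition partner :: "nat \<times> nat \<Rightarrow> nat \<times> nat" where
  "partner e = (if snd e = 10 \<and> fst e mod 6 = 0 then (fst e + 5, 1)
     else if snd e = 11 \<and> fst e mod 6 = 1 then (fst e + 5, 1)
     else if snd e = 10 \<and> fst e mod 6 = 3 then (fst e + 4, 1)
     else if snd e = 9 \<and> fst e mod 6 = 5 then (fst e + 4, 1)
     else if fst e mod 6 = 5 then (fst e - 5, 10)
     else if fst e mod 6 = 0 then (fst e - 5, 11)
     else if fst e mod 6 = 1 then (fst e - 4, 10)
     else (fst e - 4, 9))"

lemma X0_partner1: assumes "X0 e f" shows "f = partner e"
  using assms unfolding X0_def partner_def by (auto simp: prod_eq_iff)

lemma X0_partner2: assumes "X0 f e" shows "f = partner e"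
proof -
  obtain a b where e: "e = (a,b)" by (cases e)
  obtain c d where f: "f = (c,d)" by (cases f)
  have b: "b = 1" using assms unfolding e f X0_def by simp
  from assms have "(d = 10 \<and> c mod 6 = 0 \<and> a = c + 5) \<or> (d = 11 \<and> c mod 6 = 1 \<and> a = c + 5) \<or>
     (d = 10 \<and> c mod 6 = 3 \<and> a = c + 4) \<or> (d = 9 \<and> c mod 6 = 5 \<and> a = c + 4)"
    unfolding e f X0_def by simp
  then show ?thesis
  proof (elim disjE)
    assume h: "d = 10 \<and> c mod 6 = 0 \<and> a = c + 5"
    then have "a mod 6 = 5" by presburger
    then show ?thesis using h b unfolding e f partner_def by auto
  next
    assume h: "d = 11 \<and> c mod 6 = 1 \<and> a = c + 5"
    then have "a mod 6 = 0" by presburger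
    then show ?thesis using h b unfolding e f partner_def by auto
  next
    assume h: "d = 10 \<and> c mod 6 = 3 \<and> a = c + 4"
    then have "a mod 6 = 1" by presburger
    then show ?thesis using h b unfolding e f partner_def by auto
  next
    assume h: "d = 9 \<and> c mod 6 = 5 \<and> a = c + 4"
    then have "a mod 6 = 3" by presburger
    then show ?thesis using h b unfolding e f partner_def by auto
  qed
qed

lemma XR_partner: "XR e f \<Longrightarrow> f = partner e"
  unfolding XR_def using X0_partner1 X0_partner2 by blast

lemma XR_unique: assumes "XR e f1" "XR e f2" shows "f1 = f2"
  using XR_partner[OF assms(1)] XR_partner[OF assms(2)] by simp

lemma D_T13: assumes "r < 6" "okd r d" shows "(r,d) \<in> T13"
proof -
  have "r = 0 \<or> r = 1 \<or> r = 2 \<or> r = 3 \<or> r = 4 \<or> r = 5" using assms(1) by arith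
  then show ?thesis using assms(2) unfolding T13_def okd_def by (elim disjE) simp_all
qed

lemma D_T39: assumes "r < 18" "okd r d" shows "(r,d) \<in> T39"
proof -
  have "r = 0 \<or> r = 1 \<or> r = 2 \<or> r = 3 \<or> r = 4 \<or> r = 5 \<or> r = 6 \<or> r = 7 \<or> r = 8 \<or> r = 9 \<or>
        r = 10 \<or> r = 11 \<or> r = 12 \<or> r = 13 \<or> r = 14 \<or> r = 15 \<or> r = 16 \<or> r = 17" using assms(1) by arith
  then show ?thesis using assms(2) unfolding T39_def okd_def by (elim disjE) simp_all
qed

lemma okd_pos: "okd t d \<Longrightarrow> 0 < d"
  unfolding okd_def by auto

lemma okd_le: "okd t d \<Longrightarrow> d \<le> 11"
  unfolding okd_def by auto


lemma cr_toR: "crR (toR b - toR a) (toR c - toR a) = of_int (oI a b c)"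
  by (simp add: crR_def toR_def oI_def)

lemma sepI_sound: "sepI a b p q \<Longrightarrow> sepD (toR a) (toR b) (toR p) (toR q)"
  unfolding sepI_def sepD_def cr_toR by simp

lemma cr_toR2: "crR (toR b - toR a) (toR q - toR p) = of_int (oI a b q) - of_int (oI a b p)"
  by (simp add: crR_def toR_def oI_def algebra_simps)

lemma goodF_sound:
  assumes "goodF a b p q X"
  shows "closed_segment (toR a) (toR b) \<inter> closed_segment (toR p) (toR q) \<subseteq> {toR a, toR b, toR p, toR q} \<or>
    (X \<and> (\<forall>x\<in>closed_segment (toR a) (toR b) \<inter> closed_segment (toR p) (toR q).
            \<forall>y\<in>closed_segment (toR a) (toR b) \<inter> closed_segment (toR p) (toR q). x = y))"
    (is "?S \<subseteq> _ \<or> _")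
proof -
  consider "sepI a b p q" | "sepI p q a b" | "touchI a b p q" | "oI a b q \<noteq> oI a b p \<and> X"
    using assms unfolding goodF_def by (auto split: if_splits)
  then show ?thesis
  proof cases
    case 1
    then have "?S = {}" using sepD_disj[OF sepI_sound] by blast
    then show ?thesis by simp
  next
    case 2
    have "closed_segment (toR p) (toR q) \<inter> closed_segment (toR a) (toR b) = {}"
      using sepD_disj[OF sepI_sound[OF 2]] .
    then have "?S = {}" by blast
    then show ?thesis by simp
  next
    case 3
    have "?S \<subseteq> {toR a, toR b}"
    proof -
      consider "a = p \<and> oI a b q \<noteq> 0" | "a = q \<and> oI a b p \<noteq> 0" | "b = p \<and> oI b a q \<noteq> 0" | "b = q \<and> oI b a p \<noteq> 0"
        using 3 unfolding touchI_def by blast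
      then show ?thesis
      proof cases
        case 1
        have "crR (toR b - toR a) (toR q - toR a) \<noteq> 0" unfolding cr_toR using 1 by auto
        from touch_lemma[OF this] 1 show ?thesis by auto
      next
        case 2
        have "crR (toR b - toR a) (toR p - toR a) \<noteq> 0" unfolding cr_toR using 2 by auto
        from touch_lemma[OF this] 2 show ?thesis by (auto simp: closed_segment_commute[of "toR p"])
      next
        case 3
        have "crR (toR a - toR b) (toR q - toR b) \<noteq> 0" unfolding cr_toR using 3 by auto
        from touch_lemma[OF this] 3 show ?thesis by (auto simp: closed_segment_commute[of "toR a"])
      next
        case 4
        have "crR (toR a - toR b) (toR p - toR b) \<noteq> 0" unfolding cr_toR using 4 by auto
        from touch_lemma[OF this] 4 show ?thesis
          by (auto simp: closed_segment_commute[of "toR a"] closed_segment_commute[of "toR p"])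
      qed
    qed
    then show ?thesis by auto
  next
    case 4
    then have "crR (toR b - toR a) (toR q - toR p) \<noteq> 0" by (simp add: cr_toR2)
    then show ?thesis using 4 cross_lemma by blast
  qed
qed

lemma dot_on_seg:
  fixes a b x :: "real \<times> real"
  assumes "x \<in> closed_segment a b"
  shows "(fst x - fst a) * (fst b - fst a) + (snd x - snd a) * (snd b - snd a) \<ge> 0"
proof -
  obtain u where u: "0 \<le> u" "u \<le> 1" "fst x = (1-u) * fst a + u * fst b" "snd x = (1-u) * snd a + u * snd b"
    using seg_param[OF assms] by metis
  have "(fst x - fst a) * (fst b - fst a) + (snd x - snd a) * (snd b - snd a)
        = u * ((fst b - fst a)^2 + (snd b - snd a)^2)"
    by (simp add: u(3,4) power2_eq_square algebra_simps)
  also have "\<dots> \<ge> 0" using u by simp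
  finally show ?thesis .
qed

lemma notOnI_sound:
  assumes "notOnI p a b"
  shows "toR p \<notin> closed_segment (toR a) (toR b)"
proof
  assume on: "toR p \<in> closed_segment (toR a) (toR b)"
  have "of_int (oI a b p) = (0::real)" using cr_on_seg[OF on] by (simp add: cr_toR)
  then have o: "oI a b p = 0" by simp
  have "of_int (dI a b p) \<ge> (0::real)" using dot_on_seg[OF on] by (simp add: dI_def toR_def)
  then have d1: "dI a b p \<ge> 0" by simp
  have on2: "toR p \<in> closed_segment (toR b) (toR a)" using on by (simp add: closed_segment_commute)
  have "of_int (dI b a p) \<ge> (0::real)" using dot_on_seg[OF on2] by (simp add: dI_def toR_def)
  then have d2: "dI b a p \<ge> 0" by simp
  show False using assms o d1 d2 unfolding notOnI_def by simp
qed

lemma seg_NR_upper: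
  assumes "x \<in> closed_segment a b"
  shows "NR x \<le> max (NR a) (NR b)"
proof -
  obtain u where u: "0 \<le> u" "u \<le> 1" "fst x = (1-u) * fst a + u * fst b" "snd x = (1-u) * snd a + u * snd b"
    using seg_param[OF assms] by metis
  have e: "(1-u) * NR a + u * NR b - NR x = u*(1-u)*((fst a - fst b)^2 + (snd a - snd b)^2)"
    by (simp add: NR_def u(3,4) power2_eq_square algebra_simps)
  have "u*(1-u)*((fst a - fst b)^2 + (snd a - snd b)^2) \<ge> 0" using u by simp
  moreover have "(1-u) * NR a \<le> (1-u) * max (NR a) (NR b)" using u by (intro mult_left_mono) auto
  moreover have "u * NR b \<le> u * max (NR a) (NR b)" using u by (intro mult_left_mono) auto
  ultimately show ?thesis using e by (simp add: algebra_simps)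
qed

lemma seg_NR_lower:
  assumes "x \<in> closed_segment a b"
  shows "(crR a b)^2 \<le> NR x * NR (b - a)"
proof -
  obtain u where u: "fst x = (1-u) * fst a + u * fst b" "snd x = (1-u) * snd a + u * snd b"
    using seg_param[OF assms] by metis
  have c: "crR x (b - a) = crR a b"
    by (simp add: crR_def u power2_eq_square algebra_simps)
  have "NR x * NR (b - a) = (crR x (b - a))^2 + (fst x * (fst b - fst a) + snd x * (snd b - snd a))^2"
    by (simp add: NR_def crR_def power2_eq_square algebra_simps)
  then show ?thesis using c by simp
qed

lemma NR_pos: "NR (pos t) = of_int (NI (PI t))"
  by (simp add: pos_def NR_toR)

lemma cr_pos: "crR (pos s) (pos t) = of_int (cI (PI s) (PI t))"
  by (simp add: pos_def toR_def crR_def cI_def)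

lemma NR_diff_pos: "NR (pos t - pos s) = of_int (NI (fst (PI t) - fst (PI s), snd (PI t) - snd (PI s)))"
  by (simp add: pos_def toR_def NR_def NI_def)

lemma base_bounds:
  assumes "r < 6" "okd r d"
  shows "\<forall>x\<in>seg r d. NR x \<le> 648" "\<forall>y\<in>seg r d. 1 \<le> 5 * NR y"
proof -
  have T: "(r,d) \<in> T13" using D_T13[OF assms] .
  have f: "NI (PI r) \<le> 648" "NI (PI (r + d)) \<le> 648"
     "1 \<le> NI (fst (PI (r + d)) - fst (PI r), snd (PI (r + d)) - snd (PI r))"
     "NI (fst (PI (r + d)) - fst (PI r), snd (PI (r + d)) - snd (PI r)) \<le> 5 * (cI (PI r) (PI (r + d)))^2"
    using bspec[OF fc_norm T] by simp_all
  show "\<forall>x\<in>seg r d. NR x \<le> 648"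
  proof
    fix x assume "x \<in> seg r d"
    then have "NR x \<le> max (NR (pos r)) (NR (pos (r + d)))" unfolding seg_def by (rule seg_NR_upper)
    moreover have "NR (pos r) \<le> 648" "NR (pos (r+d)) \<le> 648" using f(1,2) by (simp_all add: NR_pos)
    ultimately show "NR x \<le> 648" by simp
  qed
  show "\<forall>y\<in>seg r d. 1 \<le> 5 * NR y"
  proof
    fix y assume "y \<in> seg r d"
    then have h3: "(crR (pos r) (pos (r+d)))^2 \<le> NR y * NR (pos (r+d) - pos r)" unfolding seg_def by (rule seg_NR_lower)
    have h1: "1 \<le> NR (pos (r+d) - pos r)" using f(3) by (simp add: NR_diff_pos)
    have h2: "NR (pos (r+d) - pos r) \<le> 5 * (crR (pos r) (pos (r+d)))^2"
    proof -
      have "real_of_int (NI (fst (PI (r + d)) - fst (PI r), snd (PI (r + d)) - snd (PI r)))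
            \<le> real_of_int (5 * (cI (PI r) (PI (r + d)))^2)" using f(4) by linarith
      then show ?thesis by (simp add: NR_diff_pos cr_pos)
    qed
    have "NR (pos (r+d) - pos r) * 1 \<le> NR (pos (r+d) - pos r) * (5 * NR y)"
      using h2 h3 by (simp add: algebra_simps)
    then show "1 \<le> 5 * NR y" using h1 by (simp add: mult_le_cancel_left_pos)
  qed
qed


lemma in18: "v < 18 \<Longrightarrow> v \<in> {0,1,2,3,4,5,6,7,8,9,10,11,12,13,14,15,16,17::nat}"
proof -
  assume "v < 18"
  then have "v = 0 \<or> v = 1 \<or> v = 2 \<or> v = 3 \<or> v = 4 \<or> v = 5 \<or> v = 6 \<or> v = 7 \<or> v = 8 \<or> v = 9 \<or>
        v = 10 \<or> v = 11 \<or> v = 12 \<or> v = 13 \<or> v = 14 \<or> v = 15 \<or> v = 16 \<or> v = 17" by arith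
  then show ?thesis by auto
qed

lemma in6: "v < 6 \<Longrightarrow> v \<in> {0,1,2,3,4,5::nat}"
proof -
  assume "v < 6"
  then have "v = 0 \<or> v = 1 \<or> v = 2 \<or> v = 3 \<or> v = 4 \<or> v = 5" by arith
  then show ?thesis by auto
qed

lemma seg_shift2: "seg (6*q + r) d = mulR (cpw q) ` seg r d"
  unfolding seg_def using seg_shift[of q r "r + d"] by (simp add: add.assoc)

lemma NR_shift: "NR (mulR (cpw q) y) = 18^q * NR y"
  by (simp add: NR_mulR NI_cpw)


lemma pow18: "3 \<le> q \<Longrightarrow> (5832::real) \<le> 18^q"
proof -
  assume "3 \<le> q"
  then have "(18::real)^3 \<le> 18^q" by (rule power_increasing) simp
  then show ?thesis by simp
qed

lemma seg_lower_far:
  assumes "okd s d" "18 \<le> s" "x \<in> seg s d"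
  shows "5832 \<le> 5 * NR x"
proof -
  define q where "q = s div 6"
  define r where "r = s mod 6"
  have s: "s = 6*q + r" unfolding q_def r_def by simp
  have r6: "r < 6" unfolding r_def by simp
  have q3: "3 \<le> q" using assms(2) unfolding q_def by simp
  have ok: "okd r d" using assms(1) unfolding s okd_shift .
  have "x \<in> mulR (cpw q) ` seg r d" using assms(3) unfolding s seg_shift2 .
  then obtain y where y: "y \<in> seg r d" "x = mulR (cpw q) y" by blast
  have "1 \<le> 5 * NR y" using base_bounds(2)[OF r6 ok] y(1) by blast
  have "5 * NR x = 18^q * (5 * NR y)" using y(2) by (simp add: NR_shift)
  also have "\<dots> \<ge> 18^q * 1" using \<open>1 \<le> 5 * NR y\<close> by (intro mult_left_mono) auto
  finally show ?thesis using pow18[OF q3] by simp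
qed

lemma far_pair:
  assumes "r < 6" "okd r d" "18 \<le> s" "okd s d'"
  shows "seg r d \<inter> seg s d' = {}"
proof (rule ccontr)
  assume "seg r d \<inter> seg s d' \<noteq> {}"
  then obtain x where x: "x \<in> seg r d" "x \<in> seg s d'" by blast
  have "NR x \<le> 648" using base_bounds(1)[OF assms(1,2)] x(1) by blast
  moreover have "5832 \<le> 5 * NR x" using seg_lower_far[OF assms(4,3) x(2)] .
  ultimately show False by simp
qed

lemma NR_pos_small: "v < 6 \<Longrightarrow> 1 \<le> NR (pos v) \<and> NR (pos v) \<le> 18"
proof -
  assume v: "v < 6"
  have "v \<in> {0,1,2,3,4,5}" using in6[OF v] .
  then have "1 \<le> NI (Bv v) \<and> NI (Bv v) \<le> 18" using bspec[OF fc_B] by blast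
  then show ?thesis using v by (simp add: NR_pos PI_small)
qed

lemma NR_pos_big: "18 \<le> v \<Longrightarrow> 5832 \<le> NR (pos v)"
proof -
  assume v: "18 \<le> v"
  define q where "q = v div 6"
  define r where "r = v mod 6"
  have vv: "v = 6*q + r" unfolding q_def r_def by simp
  have r6: "r < 6" unfolding r_def by simp
  have q3: "3 \<le> q" using v unfolding q_def by simp
  have "NR (pos v) = 18^q * NR (pos r)" unfolding vv pos_shift NR_shift ..
  also have "\<dots> \<ge> 18^q * 1" using NR_pos_small[OF r6] by (intro mult_left_mono) auto
  finally show ?thesis using pow18[OF q3] by simp
qed

lemma far_vert_a: "r < 6 \<Longrightarrow> okd r d \<Longrightarrow> 18 \<le> v \<Longrightarrow> pos v \<notin> seg r d"
proof
  assume a: "r < 6" "okd r d" "18 \<le> v" "pos v \<in> seg r d"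
  have "NR (pos v) \<le> 648" using base_bounds(1)[OF a(1,2)] a(4) by blast
  moreover have "5832 \<le> NR (pos v)" using NR_pos_big[OF a(3)] .
  ultimately show False by simp
qed

lemma far_vert_b: "v < 6 \<Longrightarrow> 18 \<le> s \<Longrightarrow> okd s d \<Longrightarrow> pos v \<notin> seg s d"
proof
  assume a: "v < 6" "18 \<le> s" "okd s d" "pos v \<in> seg s d"
  have "5832 \<le> 5 * NR (pos v)" using seg_lower_far[OF a(3,2,4)] .
  moreover have "NR (pos v) \<le> 18" using NR_pos_small[OF a(1)] by simp
  ultimately show False by simp
qed

lemma far_inj: "v < 6 \<Longrightarrow> 18 \<le> w \<Longrightarrow> pos v \<noteq> pos w"
proof
  assume a: "v < 6" "18 \<le> w" "pos v = pos w"
  have "5832 \<le> NR (pos w)" using NR_pos_big[OF a(2)] .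
  moreover have "NR (pos v) \<le> 18" using NR_pos_small[OF a(1)] by simp
  ultimately show False using a(3) by simp
qed

lemma toR_inj: "toR a = toR b \<Longrightarrow> a = b"
  by (simp add: toR_def prod_eq_iff)

lemma base_pair:
  assumes "r < 6" "s < 18" "okd r d" "okd s d'" "(r,d) \<noteq> (s,d')"
  shows "seg r d \<inter> seg s d' \<subseteq> {pos r, pos (r+d), pos s, pos (s+d')} \<or>
         (XR (r,d) (s,d') \<and> (\<forall>x\<in>seg r d \<inter> seg s d'. \<forall>y\<in>seg r d \<inter> seg s d'. x = y))"
proof -
  have "goodF (PI r) (PI (r+d)) (PI s) (PI (s+d')) (XR (r,d) (s,d'))"
    using bspec[OF bspec[OF fc_pairs D_T13[OF assms(1,3)]] D_T39[OF assms(2,4)]] assms(5) by simp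
  from goodF_sound[OF this] show ?thesis unfolding seg_def pos_def .
qed

lemma base_vert1:
  assumes "r < 6" "okd r d" "v < 18" "pos v \<in> seg r d"
  shows "v = r \<or> v = r + d"
proof (rule ccontr)
  assume "\<not> (v = r \<or> v = r + d)"
  then have "notOnI (PI v) (PI r) (PI (r + d))"
    using bspec[OF bspec[OF fc_vert1 in18[OF assms(3)]] D_T13[OF assms(1,2)]] by simp
  from notOnI_sound[OF this] assms(4) show False unfolding seg_def pos_def by simp
qed

lemma base_vert2:
  assumes "v < 6" "s < 18" "okd s d" "pos v \<in> seg s d"
  shows "v = s \<or> v = s + d"
proof (rule ccontr)
  assume "\<not> (v = s \<or> v = s + d)"
  then have "notOnI (PI v) (PI s) (PI (s + d))"
    using bspec[OF bspec[OF fc_vert2 in6[OF assms(1)]] D_T39[OF assms(2,3)]] by simp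
  from notOnI_sound[OF this] assms(4) show False unfolding seg_def pos_def by simp
qed

lemma base_inj:
  assumes "v < 6" "w < 18" "pos v = pos w"
  shows "v = w"
proof (rule ccontr)
  assume "v \<noteq> w"
  then have "PI v \<noteq> PI w" using bspec[OF bspec[OF fc_inj in6[OF assms(1)]] in18[OF assms(2)]] by simp
  then show False using assms(3) toR_inj unfolding pos_def by blast
qed


lemma G_pair_le:
  assumes "okd t d" "okd t' d'" "(t,d) \<noteq> (t',d')" "t div 6 \<le> t' div 6"
  shows "seg t d \<inter> seg t' d' \<subseteq> {pos t, pos (t+d), pos t', pos (t'+d')} \<or>
    (XR (t,d) (t',d') \<and> (\<forall>x\<in>seg t d \<inter> seg t' d'. \<forall>y\<in>seg t d \<inter> seg t' d'. x = y))"
proof -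
  define q where "q = t div 6"
  define r where "r = t mod 6"
  define s where "s = t' - 6*q"
  have tt: "t = 6*q + r" unfolding q_def r_def by simp
  have "6 * q \<le> 6 * (t' div 6)" using assms(4) unfolding q_def by simp
  then have "6 * q \<le> t'" using times_div_less_eq_dividend[of 6 t'] by linarith
  then have tt': "t' = 6*q + s" unfolding s_def by simp
  have r6: "r < 6" unfolding r_def by simp
  have ok1: "okd r d" using assms(1) unfolding tt okd_shift .
  have ok2: "okd s d'" using assms(2) unfolding tt' okd_shift .
  have ne: "(r,d) \<noteq> (s,d')" using assms(3) tt tt' by auto
  let ?M = "mulR (cpw q)"
  have inj: "inj ?M" by (rule cpw_inj)
  have I: "seg t d \<inter> seg t' d' = ?M ` (seg r d \<inter> seg s d')"
    unfolding tt tt' seg_shift2 by (simp add: image_Int[OF inj])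
  have P: "pos t = ?M (pos r)" "pos (t+d) = ?M (pos (r+d))" "pos t' = ?M (pos s)" "pos (t'+d') = ?M (pos (s+d'))"
    unfolding tt tt' by (simp_all add: pos_shift[symmetric] add.assoc)
  have X: "XR (t,d) (t',d') = XR (r,d) (s,d')" unfolding tt tt' by (rule XR_shift)
  show ?thesis
  proof (cases "s < 18")
    case True
    from base_pair[OF r6 True ok1 ok2 ne] show ?thesis
    proof
      assume h: "seg r d \<inter> seg s d' \<subseteq> {pos r, pos (r+d), pos s, pos (s+d')}"
      have "seg t d \<inter> seg t' d' \<subseteq> ?M ` {pos r, pos (r+d), pos s, pos (s+d')}"
        unfolding I using h by (rule image_mono)
      then show ?thesis unfolding P by simp
    next
      assume h: "XR (r,d) (s,d') \<and> (\<forall>x\<in>seg r d \<inter> seg s d'. \<forall>y\<in>seg r d \<inter> seg s d'. x = y)"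
      have "\<forall>x\<in>seg t d \<inter> seg t' d'. \<forall>y\<in>seg t d \<inter> seg t' d'. x = y"
      proof (intro ballI)
        fix x y assume x: "x \<in> seg t d \<inter> seg t' d'" and y: "y \<in> seg t d \<inter> seg t' d'"
        obtain x0 where x0: "x0 \<in> seg r d \<inter> seg s d'" "x = ?M x0" using x unfolding I by blast
        obtain y0 where y0: "y0 \<in> seg r d \<inter> seg s d'" "y = ?M y0" using y unfolding I by blast
        have "x0 = y0" using h x0(1) y0(1) by blast
        then show "x = y" using x0(2) y0(2) by simp
      qed
      then show ?thesis using h X by simp
    qed
  next
    case False
    then have "seg r d \<inter> seg s d' = {}" using far_pair[OF r6 ok1 _ ok2] by simp
    then show ?thesis unfolding I by simp
  qed
qed

lemma G_pair:
  assumes "okd t d" "okd t' d'" "(t,d) \<noteq> (t',d')"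
  shows "seg t d \<inter> seg t' d' \<subseteq> {pos t, pos (t+d), pos t', pos (t'+d')} \<or>
    (XR (t,d) (t',d') \<and> (\<forall>x\<in>seg t d \<inter> seg t' d'. \<forall>y\<in>seg t d \<inter> seg t' d'. x = y))"
proof (cases "t div 6 \<le> t' div 6")
  case True
  then show ?thesis using G_pair_le[OF assms] by blast
next
  case False
  then have "t' div 6 \<le> t div 6" by simp
  have ne: "(t',d') \<noteq> (t,d)" using assms(3) by auto
  have h: "seg t' d' \<inter> seg t d \<subseteq> {pos t', pos (t'+d'), pos t, pos (t+d)} \<or>
    (XR (t',d') (t,d) \<and> (\<forall>x\<in>seg t' d' \<inter> seg t d. \<forall>y\<in>seg t' d' \<inter> seg t d. x = y))"
    using G_pair_le[OF assms(2,1) ne \<open>t' div 6 \<le> t div 6\<close>] .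
  have e1: "seg t' d' \<inter> seg t d = seg t d \<inter> seg t' d'" by blast
  have e2: "{pos t', pos (t'+d'), pos t, pos (t+d)} = {pos t, pos (t+d), pos t', pos (t'+d')}" by blast
  show ?thesis using h unfolding e1 e2 XR_sym[of "(t',d')"] .
qed

lemma G_vert:
  assumes "okd t d" "pos v \<in> seg t d"
  shows "v = t \<or> v = t + d"
proof (cases "t div 6 \<le> v div 6")
  case True
  define q where "q = t div 6"
  define r where "r = t mod 6"
  define w where "w = v - 6*q"
  have tt: "t = 6*q + r" unfolding q_def r_def by simp
  have "6 * q \<le> 6 * (v div 6)" using True unfolding q_def by simp
  then have "6 * q \<le> v" using times_div_less_eq_dividend[of 6 v] by linarith
  then have vv: "v = 6*q + w" unfolding w_def by simp
  have r6: "r < 6" unfolding r_def by simp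
  have ok: "okd r d" using assms(1) unfolding tt okd_shift .
  have "mulR (cpw q) (pos w) \<in> mulR (cpw q) ` seg r d"
    using assms(2) unfolding tt vv seg_shift2 pos_shift .
  then have on: "pos w \<in> seg r d" using inj_image_mem_iff[OF cpw_inj] by blast
  have "w < 18" using far_vert_a[OF r6 ok] on by (meson not_le)
  then have "w = r \<or> w = r + d" using base_vert1[OF r6 ok _ on] by simp
  then show ?thesis using tt vv by auto
next
  case False
  define q where "q = v div 6"
  define u where "u = v mod 6"
  define s where "s = t - 6*q"
  have vv: "v = 6*q + u" unfolding q_def u_def by simp
  have "6 * q \<le> 6 * (t div 6)" using False unfolding q_def by simp
  then have "6 * q \<le> t" using times_div_less_eq_dividend[of 6 t] by linarith
  then have tt: "t = 6*q + s" unfolding s_def by simp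
  have u6: "u < 6" unfolding u_def by simp
  have ok: "okd s d" using assms(1) unfolding tt okd_shift .
  have "mulR (cpw q) (pos u) \<in> mulR (cpw q) ` seg s d"
    using assms(2) unfolding tt vv seg_shift2 pos_shift .
  then have on: "pos u \<in> seg s d" using inj_image_mem_iff[OF cpw_inj] by blast
  have "s < 18" using far_vert_b[OF u6 _ ok] on by (meson not_le)
  then have "u = s \<or> u = s + d" using base_vert2[OF u6 _ ok on] by simp
  then show ?thesis using tt vv by auto
qed

lemma G_inj_le:
  assumes "pos v = pos w" "v div 6 \<le> w div 6"
  shows "v = w"
proof -
  define q where "q = v div 6"
  define u where "u = v mod 6"
  define s where "s = w - 6*q"
  have vv: "v = 6*q + u" unfolding q_def u_def by simp
  have "6 * q \<le> 6 * (w div 6)" using assms(2) unfolding q_def by simp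
  then have "6 * q \<le> w" using times_div_less_eq_dividend[of 6 w] by linarith
  then have ww: "w = 6*q + s" unfolding s_def by simp
  have u6: "u < 6" unfolding u_def by simp
  have "mulR (cpw q) (pos u) = mulR (cpw q) (pos s)" using assms(1) unfolding vv ww pos_shift .
  then have e: "pos u = pos s" using cpw_inj unfolding inj_def by blast
  have "s < 18" using far_inj[OF u6] e by (meson not_le)
  then have "u = s" using base_inj[OF u6 _ e] by simp
  then show ?thesis using vv ww by simp
qed

lemma G_inj: "pos v = pos w \<Longrightarrow> v = w"
proof (cases "v div 6 \<le> w div 6")
  case True
  assume "pos v = pos w"
  then show ?thesis using G_inj_le True by blast
next
  case False
  assume e: "pos v = pos w"
  have "w div 6 \<le> v div 6" using False by simp
  then show ?thesis using G_inj_le[OF e[symmetric]] by simp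
qed


definition En :: "nat \<Rightarrow> nat set set" where
  "En n = {{t, t+d} | t d. okd t d \<and> t + d < n}"

definition gam :: "nat set \<Rightarrow> real \<Rightarrow> real \<times> real" where
  "gam e = linepath (pos (Min e)) (pos (Max e))"

lemma Min_edge: "0 < d \<Longrightarrow> Min {t, t+d} = (t::nat)"
  by (simp add: min_def)

lemma Max_edge: "0 < d \<Longrightarrow> Max {t, t+d} = (t::nat) + d"
  by (simp add: max_def)

lemma edge_eq:
  fixes t d t' d' :: nat
  assumes "0 < d" "0 < d'" "{t, t+d} = {t', t'+d'}"
  shows "t = t' \<and> d = d'"
proof -
  have "Min {t, t+d} = Min {t', t'+d'}" "Max {t, t+d} = Max {t', t'+d'}" using assms(3) by simp_all
  then show ?thesis using assms(1,2) by (simp add: Min_edge Max_edge)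
qed

lemma gam_img: "0 < d \<Longrightarrow> path_image (gam {t, t+d}) = seg t d"
  unfolding gam_def seg_def by (simp add: Min_edge Max_edge)

lemma gam_start: "0 < d \<Longrightarrow> pathstart (gam {t, t+d}) = pos t"
  unfolding gam_def by (simp add: Min_edge)

lemma gam_finish: "0 < d \<Longrightarrow> pathfinish (gam {t, t+d}) = pos (t+d)"
  unfolding gam_def by (simp add: Max_edge)

lemma gam_arc: "0 < d \<Longrightarrow> arc (gam {t, t+d})"
proof -
  assume d: "0 < d"
  have "pos t \<noteq> pos (t+d)" using G_inj d by fastforce
  then show ?thesis unfolding gam_def using d by (simp add: Min_edge Max_edge)
qed

lemma En_elim:
  assumes "e \<in> En n"
  obtains t d where "e = {t, t+d}" "okd t d" "t + d < n" "0 < d"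
  using assms okd_pos unfolding En_def by blast

lemma planar: "k_planar 1 {..<n} (En n)"
proof -
  have inj: "inj_on pos {..<n}" using G_inj by (auto simp: inj_on_def)
  have edges: "\<forall>e\<in>En n. arc (gam e) \<and> {pathstart (gam e), pathfinish (gam e)} = pos ` e \<and>
                   path_image (gam e) \<inter> pos ` {..<n} = pos ` e"
  proof
    fix e assume "e \<in> En n"
    then obtain t d where e: "e = {t, t+d}" "okd t d" "t + d < n" "0 < d" by (rule En_elim)
    have a: "arc (gam e)" unfolding e(1) using gam_arc[OF e(4)] .
    have b: "{pathstart (gam e), pathfinish (gam e)} = pos ` e"
      unfolding e(1) using gam_start[OF e(4)] gam_finish[OF e(4)] by simp
    have c: "path_image (gam e) \<inter> pos ` {..<n} = pos ` e"
    proof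
      show "path_image (gam e) \<inter> pos ` {..<n} \<subseteq> pos ` e"
      proof
        fix x assume x: "x \<in> path_image (gam e) \<inter> pos ` {..<n}"
        then obtain v where v: "x = pos v" "v < n" by auto
        have "pos v \<in> seg t d" using x v unfolding e(1) gam_img[OF e(4)] by simp
        then have "v = t \<or> v = t + d" using G_vert[OF e(2)] by blast
        then show "x \<in> pos ` e" using v e(1) by auto
      qed
    next
      show "pos ` e \<subseteq> path_image (gam e) \<inter> pos ` {..<n}"
        using e(1,3) unfolding e(1) gam_img[OF e(4)] seg_def by auto
    qed
    show "arc (gam e) \<and> {pathstart (gam e), pathfinish (gam e)} = pos ` e \<and>
                   path_image (gam e) \<inter> pos ` {..<n} = pos ` e" using a b c by blast
  qed
  have cross: "\<forall>e\<in>En n. finite {(f, p). f \<in> En n \<and> f \<noteq> e \<and>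
                   p \<in> path_image (gam e) \<inter> path_image (gam f) \<and> p \<notin> pos ` {..<n}} \<and>
               card {(f, p). f \<in> En n \<and> f \<noteq> e \<and>
                   p \<in> path_image (gam e) \<inter> path_image (gam f) \<and> p \<notin> pos ` {..<n}} \<le> 1"
  proof
    fix e assume "e \<in> En n"
    then obtain t d where e: "e = {t, t+d}" "okd t d" "t + d < n" "0 < d" by (rule En_elim)
    define X where "X = {(f, p). f \<in> En n \<and> f \<noteq> e \<and>
                   p \<in> path_image (gam e) \<inter> path_image (gam f) \<and> p \<notin> pos ` {..<n}}"
    have mem: "\<exists>t' d'. f = {t', t'+d'} \<and> XR (t,d) (t',d') \<and> p \<in> seg t d \<inter> seg t' d' \<and>
                  (\<forall>x\<in>seg t d \<inter> seg t' d'. \<forall>y\<in>seg t d \<inter> seg t' d'. x = y)"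
      if "(f,p) \<in> X" for f p
    proof -
      have f: "f \<in> En n" "f \<noteq> e" "p \<in> path_image (gam e) \<inter> path_image (gam f)" "p \<notin> pos ` {..<n}"
        using that unfolding X_def by auto
      obtain t' d' where f': "f = {t', t'+d'}" "okd t' d'" "t' + d' < n" "0 < d'" using f(1) by (rule En_elim)
      have ne: "(t,d) \<noteq> (t',d')" using f(2) e(1) f'(1) by auto
      have p: "p \<in> seg t d \<inter> seg t' d'" using f(3) unfolding e(1) f'(1) gam_img[OF e(4)] gam_img[OF f'(4)] .
      have "p \<notin> {pos t, pos (t+d), pos t', pos (t'+d')}" using f(4) e(3) f'(3) by auto
      then have "\<not> (seg t d \<inter> seg t' d' \<subseteq> {pos t, pos (t+d), pos t', pos (t'+d')})" using p by blast
      then have "XR (t,d) (t',d') \<and> (\<forall>x\<in>seg t d \<inter> seg t' d'. \<forall>y\<in>seg t d \<inter> seg t' d'. x = y)"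
        using G_pair[OF e(2) f'(2) ne] by blast
      then show ?thesis using f'(1) p by blast
    qed
    have key: "\<forall>z\<in>X. \<forall>z'\<in>X. z = z'"
    proof (intro ballI)
      fix z z' assume z: "z \<in> X" and z': "z' \<in> X"
      obtain f p where fp: "z = (f,p)" by (cases z)
      obtain f' p' where fp': "z' = (f',p')" by (cases z')
      obtain t1 d1 where h1: "f = {t1, t1+d1}" "XR (t,d) (t1,d1)" "p \<in> seg t d \<inter> seg t1 d1"
          "\<forall>x\<in>seg t d \<inter> seg t1 d1. \<forall>y\<in>seg t d \<inter> seg t1 d1. x = y"
        using mem[of f p] z fp by blast
      obtain t2 d2 where h2: "f' = {t2, t2+d2}" "XR (t,d) (t2,d2)" "p' \<in> seg t d \<inter> seg t2 d2"
        using mem[of f' p'] z' fp' by blast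
      have "(t1,d1) = (t2,d2)" using XR_unique[OF h1(2) h2(2)] .
      then have "f = f'" "p = p'" using h1 h2 by auto
      then show "z = z'" using fp fp' by simp
    qed
    have fin: "finite X"
    proof (cases "X = {}")
      case True then show ?thesis by simp
    next
      case False
      then obtain z where "z \<in> X" by blast
      then have "X \<subseteq> {z}" using key by blast
      then show ?thesis using finite_subset by blast
    qed
    have "card X \<le> 1" using card_le_Suc0_iff_eq[OF fin] key by simp
    then show "finite {(f, p). f \<in> En n \<and> f \<noteq> e \<and>
                   p \<in> path_image (gam e) \<inter> path_image (gam f) \<and> p \<notin> pos ` {..<n}} \<and>
               card {(f, p). f \<in> En n \<and> f \<noteq> e \<and>
                   p \<in> path_image (gam e) \<inter> path_image (gam f) \<and> p \<notin> pos ` {..<n}} \<le> 1"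
      using fin unfolding X_def by simp
  qed
  show ?thesis unfolding k_planar_def
    apply (rule exI[of _ pos])
    apply (rule exI[of _ gam])
    using inj edges cross by blast
qed


definition Adj :: "nat \<Rightarrow> nat \<Rightarrow> bool" where
  "Adj a b \<longleftrightarrow> (a < b \<and> okd a (b - a)) \<or> (b < a \<and> okd b (a - b))"

lemma Adj_sym: "Adj a b = Adj b a"
  unfolding Adj_def by auto

lemma En_Adj: assumes "{a,b} \<in> En n" shows "Adj a b"
proof -
  obtain t d where e: "{a,b} = {t, t+d}" "okd t d" "0 < d" using assms by (rule En_elim)
  then have "(a = t \<and> b = t + d) \<or> (a = t + d \<and> b = t)" by (auto simp: doubleton_eq_iff)
  then show ?thesis using e unfolding Adj_def by auto
qed

lemma Adj_shift: "Adj (6*k + a) (6*k + b) = Adj a b"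
  unfolding Adj_def by (auto simp: okd_shift)

lemma Adj_up: assumes "Adj a b" "a < b" shows "\<exists>\<delta>. b = a + \<delta> \<and> okd a \<delta>"
  using assms unfolding Adj_def by (metis add_diff_inverse_nat less_asym')

lemma Adj_any: assumes "Adj a b" shows "\<exists>\<delta>. (b = a + \<delta> \<and> okd a \<delta>) \<or> (a = b + \<delta> \<and> okd b \<delta>)"
  using assms unfolding Adj_def by (metis add_diff_inverse_nat less_asym')

lemma D5: "okd t d \<Longrightarrow> d \<in> {1,5,9,10,11}"
  unfolding okd_def by auto

lemma no3_fin: "\<forall>a\<in>{0,1,2,3,4,5::nat}. \<forall>\<beta>\<in>{1,5,9,10,11::nat}. \<forall>\<gamma>\<in>{1,5,9,10,11::nat}.
  okd a \<beta> \<longrightarrow> okd a \<gamma> \<longrightarrow> \<beta> \<noteq> \<gamma> \<longrightarrow> \<not> Adj (a+\<beta>) (a+\<gamma>)"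
  by (simp add: Adj_def okd_def)

lemma no4_fin: "\<forall>a\<in>{0,1,2,3,4,5::nat}. \<forall>\<beta>\<in>{1,5,9,10,11::nat}. \<forall>\<eta>\<in>{1,5,9,10,11::nat}. \<forall>\<kappa>\<in>{1,5,9,10,11::nat}.
  okd a \<beta> \<longrightarrow> okd a \<eta> \<longrightarrow> \<beta> \<noteq> \<eta> \<longrightarrow>
  (Adj (a+\<beta>) (a+\<beta>+\<kappa>) \<longrightarrow> \<not> Adj (a+\<beta>+\<kappa>) (a+\<eta>)) \<and>
  (\<kappa> < \<beta> \<longrightarrow> Adj (a+\<beta>) (a+\<beta>-\<kappa>) \<longrightarrow> \<not> Adj (a+\<beta>-\<kappa>) (a+\<eta>))"
  by (simp add: Adj_def okd_def)

lemma normalize: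
  fixes a :: nat
  obtains k a0 where "a = 6*k + a0" "a0 < 6" "\<And>x. a \<le> x \<Longrightarrow> x = 6*k + (x - 6*k)"
proof -
  have "a = 6*(a div 6) + a mod 6" by simp
  moreover have "a mod 6 < 6" by simp
  moreover have "\<And>x. a \<le> x \<Longrightarrow> x = 6*(a div 6) + (x - 6*(a div 6))"
    using times_div_less_eq_dividend[of 6 a] by linarith
  ultimately show ?thesis using that by blast
qed

lemma no3_min:
  assumes "a < b" "a < c" "b \<noteq> c" "Adj a b" "Adj b c" "Adj c a"
  shows False
proof -
  obtain k a0 where k: "a = 6*k + a0" "a0 < 6" "\<And>x. a \<le> x \<Longrightarrow> x = 6*k + (x - 6*k)" using normalize[of a] by blast
  define b0 where "b0 = b - 6*k"
  define c0 where "c0 = c - 6*k"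
  have bb: "b = 6*k + b0" "c = 6*k + c0" using k(3) assms(1,2) unfolding b0_def c0_def by auto
  have A: "Adj a0 b0" "Adj b0 c0" "Adj a0 c0" using assms(4,5,6) unfolding k(1) bb Adj_shift
    by (auto simp: Adj_sym)
  have lt: "a0 < b0" "a0 < c0" "b0 \<noteq> c0" using assms(1,2,3) unfolding k(1) bb by auto
  obtain \<beta> where b: "b0 = a0 + \<beta>" "okd a0 \<beta>" using Adj_up[OF A(1) lt(1)] by blast
  obtain \<gamma> where c: "c0 = a0 + \<gamma>" "okd a0 \<gamma>" using Adj_up[OF A(3) lt(2)] by blast
  have "\<beta> \<noteq> \<gamma>" using lt(3) b c by auto
  then have "\<not> Adj (a0+\<beta>) (a0+\<gamma>)"
    using bspec[OF bspec[OF bspec[OF no3_fin in6[OF k(2)]] D5[OF b(2)]] D5[OF c(2)]] b(2) c(2) by blast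
  then show False using A(2) b(1) c(1) by simp
qed

lemma no4_min:
  assumes "a < b" "a < c" "a < d" "b \<noteq> d" "Adj a b" "Adj b c" "Adj c d" "Adj d a"
  shows False
proof -
  obtain k a0 where k: "a = 6*k + a0" "a0 < 6" "\<And>x. a \<le> x \<Longrightarrow> x = 6*k + (x - 6*k)" using normalize[of a] by blast
  define b0 where "b0 = b - 6*k"
  define c0 where "c0 = c - 6*k"
  define d0 where "d0 = d - 6*k"
  have bb: "b = 6*k + b0" "c = 6*k + c0" "d = 6*k + d0" using k(3) assms(1,2,3) unfolding b0_def c0_def d0_def by auto
  have A: "Adj a0 b0" "Adj b0 c0" "Adj c0 d0" "Adj a0 d0" using assms(5-8) unfolding k(1) bb Adj_shift
    by (auto simp: Adj_sym)
  have lt: "a0 < b0" "a0 < c0" "a0 < d0" "b0 \<noteq> d0" using assms(1-4) unfolding k(1) bb by auto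
  obtain \<beta> where b: "b0 = a0 + \<beta>" "okd a0 \<beta>" using Adj_up[OF A(1) lt(1)] by blast
  obtain \<eta> where d: "d0 = a0 + \<eta>" "okd a0 \<eta>" using Adj_up[OF A(4) lt(3)] by blast
  have ne: "\<beta> \<noteq> \<eta>" using lt(4) b d by auto
  obtain \<kappa> where c: "(c0 = b0 + \<kappa> \<and> okd b0 \<kappa>) \<or> (b0 = c0 + \<kappa> \<and> okd c0 \<kappa>)" using Adj_any[OF A(2)] by blast
  have kap: "\<kappa> \<in> {1,5,9,10,11}" using c D5 by blast
  have F: "(Adj (a0+\<beta>) (a0+\<beta>+\<kappa>) \<longrightarrow> \<not> Adj (a0+\<beta>+\<kappa>) (a0+\<eta>)) \<and>
      (\<kappa> < \<beta> \<longrightarrow> Adj (a0+\<beta>) (a0+\<beta>-\<kappa>) \<longrightarrow> \<not> Adj (a0+\<beta>-\<kappa>) (a0+\<eta>))"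
    using bspec[OF bspec[OF bspec[OF bspec[OF no4_fin in6[OF k(2)]] D5[OF b(2)]] D5[OF d(2)]] kap] b(2) d(2) ne by blast
  from c show False
  proof
    assume h: "c0 = b0 + \<kappa> \<and> okd b0 \<kappa>"
    then have "c0 = a0 + \<beta> + \<kappa>" using b by simp
    then show False using F A(2,3) b(1) d(1) by simp
  next
    assume h: "b0 = c0 + \<kappa> \<and> okd c0 \<kappa>"
    then have "c0 = a0 + \<beta> - \<kappa>" "\<kappa> < \<beta>" using b lt(2) by auto
    then show False using F A(2,3) b(1) d(1) by simp
  qed
qed

lemma no3:
  assumes "distinct [a,b,c]" "Adj a b" "Adj b c" "Adj c a"
  shows False
proof -
  consider "a < b \<and> a < c" | "b < a \<and> b < c" | "c < a \<and> c < b" using assms(1) by fastforce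
  then show False
  proof cases
    case 1 then show False using no3_min[of a b c] assms by auto
  next
    case 2 then show False using no3_min[of b c a] assms by auto
  next
    case 3 then show False using no3_min[of c a b] assms by auto
  qed
qed

lemma no4:
  assumes "distinct [a,b,c,d]" "Adj a b" "Adj b c" "Adj c d" "Adj d a"
  shows False
proof -
  consider "a < b \<and> a < c \<and> a < d" | "b < a \<and> b < c \<and> b < d" | "c < a \<and> c < b \<and> c < d" | "d < a \<and> d < b \<and> d < c"
    using assms(1) by fastforce
  then show False
  proof cases
    case 1 then show False using no4_min[of a b c d] assms by auto
  next
    case 2 then show False using no4_min[of b c d a] assms by auto
  next
    case 3 then show False using no4_min[of c d a b] assms by auto
  next
    case 4 then show False using no4_min[of d a b c] assms by (auto simp: Adj_sym)
  qed
qed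


lemma En_Adj': "e \<in> En n \<Longrightarrow> e = {a,b} \<Longrightarrow> Adj a b"
  using En_Adj by blast

lemma no_short_cycle:
  assumes "has_cycle_of_length {..<n} (En n) k"
  shows "5 \<le> k"
proof (rule ccontr)
  assume "\<not> 5 \<le> k"
  moreover obtain xs where xs: "length xs = k" "distinct xs" "set xs \<subseteq> {..<n}"
      "\<forall>i<k. {xs ! i, xs ! ((i + 1) mod k)} \<in> En n" and k3: "3 \<le> k"
    using assms unfolding has_cycle_of_length_def by blast
  ultimately have "k = 3 \<or> k = 4" by arith
  then show False
  proof
    assume k: "k = 3"
    have "length xs = Suc (Suc (Suc 0))" using xs(1) k by simp
    then obtain a b c where abc: "xs = [a,b,c]" by (auto simp: length_Suc_conv)
    have "{a,b} \<in> En n" using xs(4)[rule_format, of 0] unfolding abc k by simp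
    moreover have "{b,c} \<in> En n" using xs(4)[rule_format, of 1] unfolding abc k by simp
    moreover have "{c,a} \<in> En n" using xs(4)[rule_format, of 2] unfolding abc k by simp
    moreover have "distinct [a,b,c]" using xs(2) abc by simp
    ultimately show False using no3[of a b c] En_Adj by blast
  next
    assume k: "k = 4"
    have "length xs = Suc (Suc (Suc (Suc 0)))" using xs(1) k by simp
    then obtain a b c d where abcd: "xs = [a,b,c,d]" by (auto simp: length_Suc_conv)
    have "{a,b} \<in> En n" using xs(4)[rule_format, of 0] unfolding abcd k by simp
    moreover have "{b,c} \<in> En n" using xs(4)[rule_format, of 1] unfolding abcd k by simp
    moreover have "{c,d} \<in> En n" using xs(4)[rule_format, of 2] unfolding abcd k by simp
    moreover have "{d,a} \<in> En n" using xs(4)[rule_format, of 3] unfolding abcd k by simp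
    moreover have "distinct [a,b,c,d]" using xs(2) abcd by simp
    ultimately show False using no4[of a b c d] En_Adj by blast
  qed
qed

lemma En_mem: "okd t d \<Longrightarrow> t + d < n \<Longrightarrow> {t, t+d} \<in> En n"
  unfolding En_def by blast

lemma cycle5:
  assumes "13 \<le> n"
  shows "has_cycle_of_length {..<n} (En n) 5"
proof -
  have e: "{0,1} \<in> En n" "{1,12} \<in> En n" "{12,11} \<in> En n" "{11,10} \<in> En n" "{10,0} \<in> En n"
  proof -
    show "{0,1} \<in> En n" using En_mem[of 0 1 n] assms by (simp add: okd_def)
    show "{1,12} \<in> En n" using En_mem[of 1 11 n] assms by (simp add: okd_def)
    show "{12,11} \<in> En n" using En_mem[of 11 1 n] assms by (simp add: okd_def insert_commute)
    show "{11,10} \<in> En n" using En_mem[of 10 1 n] assms by (simp add: okd_def insert_commute)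
    show "{10,0} \<in> En n" using En_mem[of 0 10 n] assms by (simp add: okd_def insert_commute)
  qed
  have "\<forall>i<5. {[0,1,12,11,10::nat] ! i, [0,1,12,11,10::nat] ! ((i + 1) mod 5)} \<in> En n"
  proof (intro allI impI)
    fix i :: nat assume "i < 5"
    then have "i = 0 \<or> i = 1 \<or> i = 2 \<or> i = 3 \<or> i = 4" by arith
    then show "{[0,1,12,11,10::nat] ! i, [0,1,12,11,10::nat] ! ((i + 1) mod 5)} \<in> En n"
      using e by (elim disjE) simp_all
  qed
  then show ?thesis unfolding has_cycle_of_length_def using assms
    by (intro conjI exI[of _ "[0,1,12,11,10]"]) auto
qed

lemma girth5:
  assumes "13 \<le> n"
  shows "girth {..<n} (En n) = 5"
proof -
  let ?K = "{k. has_cycle_of_length {..<n} (En n) k}"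
  have "(INF k\<in>?K. enat k) \<le> enat 5" using cycle5[OF assms] by (intro INF_lower) simp
  moreover have "enat 5 \<le> (INF k\<in>?K. enat k)" using no_short_cycle by (intro INF_greatest) simp
  ultimately have "(INF k\<in>?K. enat k) = enat 5" by (rule antisym)
  then show ?thesis unfolding girth_def by (simp add: numeral_eq_enat)
qed

lemma simple: "simple_graph {..<n} (En n)"
  unfolding simple_graph_def
proof (intro conjI ballI)
  show "finite {..<n}" by simp
next
  fix e assume "e \<in> En n"
  then obtain t d where e: "e = {t, t+d}" "okd t d" "t + d < n" "0 < d" by (rule En_elim)
  then show "\<exists>u v. e = {u, v} \<and> u \<in> {..<n} \<and> v \<in> {..<n} \<and> u \<noteq> v"
    by (intro exI[of _ t] exI[of _ "t+d"]) auto
qed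

lemma finite_En: "finite (En n)"
proof -
  have "En n \<subseteq> Pow {..<n}" unfolding En_def by auto
  then show ?thesis by (rule finite_subset) simp
qed

lemma T13_props: "\<forall>x\<in>T13. okd (fst x) (snd x) \<and> fst x < 6 \<and> 0 < snd x \<and> snd x \<le> 11"
  unfolding T13_def by (simp add: okd_def)

lemma card_T13: "card T13 = 13"
  unfolding T13_def by simp

lemma count:
  assumes "11 \<le> n"
  shows "13 * ((n - 11) div 6) \<le> card (En n)"
proof -
  define Q where "Q = (n - 11) div 6"
  define h where "h = (\<lambda>(q::nat, x::nat \<times> nat). {6*q + fst x, 6*q + fst x + snd x})"
  have sub: "h ` ({..<Q} \<times> T13) \<subseteq> En n"
  proof
    fix e assume "e \<in> h ` ({..<Q} \<times> T13)"
    then obtain q x where qx: "q < Q" "x \<in> T13" "e = {6*q + fst x, 6*q + fst x + snd x}"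
      unfolding h_def by auto
    have p: "okd (fst x) (snd x)" "fst x < 6" "snd x \<le> 11" using T13_props qx(2) by auto
    have "6 * q + 6 \<le> 6 * Q" using qx(1) by simp
    moreover have "6 * Q \<le> n - 11" unfolding Q_def using times_div_less_eq_dividend[of 6 "n - 11"] by simp
    ultimately have "6*q + fst x + snd x < n" using p assms by linarith
    moreover have "okd (6*q + fst x) (snd x)" using p(1) by (simp add: okd_shift)
    ultimately show "e \<in> En n" using qx(3) En_mem by simp
  qed
  have inj: "inj_on h ({..<Q} \<times> T13)"
  proof (rule inj_onI)
    fix z z' assume z: "z \<in> {..<Q} \<times> T13" and z': "z' \<in> {..<Q} \<times> T13" and hz: "h z = h z'"
    obtain q x where zz: "z = (q,x)" by (cases z)
    obtain q' x' where zz': "z' = (q',x')" by (cases z')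
    have p: "fst x < 6" "0 < snd x" using T13_props z zz by auto
    have p': "fst x' < 6" "0 < snd x'" using T13_props z' zz' by auto
    have "{6*q + fst x, 6*q + fst x + snd x} = {6*q' + fst x', 6*q' + fst x' + snd x'}"
      using hz unfolding zz zz' h_def by simp
    then have e: "6*q + fst x = 6*q' + fst x'" "snd x = snd x'" using edge_eq[OF p(2) p'(2)] by auto
    have "q = q'" using e(1) p(1) p'(1) by linarith
    moreover have "fst x = fst x'" using e(1) \<open>q = q'\<close> by simp
    ultimately show "z = z'" using zz zz' e(2) by (simp add: prod_eq_iff)
  qed
  have "card (h ` ({..<Q} \<times> T13)) = Q * 13"
    using card_image[OF inj] card_T13 by (simp add: card_cartesian_product)
  moreover have "card (h ` ({..<Q} \<times> T13)) \<le> card (En n)"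
    using card_mono[OF finite_En sub] .
  ultimately show ?thesis unfolding Q_def by simp
qed

lemma count_real:
  assumes "11 \<le> n"
  shows "(2 + 1/6) * real n - 35 \<le> real (card (En n))"
proof -
  define Q where "Q = (n - 11) div 6"
  have "n - 11 \<le> 6 * Q + 5" unfolding Q_def by linarith
  then have "real n \<le> 6 * real Q + 16" using assms by linarith
  moreover have "13 * real Q \<le> real (card (En n))" using count[OF assms] unfolding Q_def by linarith
  ultimately have "13/6 * real n - 35 \<le> real (card (En n))" by linarith
  moreover have "(2 + 1/6) * real n = 13/6 * real n" by simp
  ultimately show ?thesis by simp
qed

theorem theorem9:
  shows "\<exists>C::real. \<exists>N::nat. \<forall>n\<ge>N. \<exists>(V :: nat set) (E :: nat set set).
           simple_graph V E \<and> card V = n \<and> k_planar 1 V E \<and> girth V E = 5 \<and>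
           real (card E) \<ge> (2 + 1/6) * real n - C"
proof (intro exI allI impI)
  fix n :: nat assume n: "13 \<le> n"
  show "simple_graph {..<n} (En n) \<and> card {..<n} = n \<and> k_planar 1 {..<n} (En n) \<and>
        girth {..<n} (En n) = 5 \<and> real (card (En n)) \<ge> (2 + 1/6) * real n - 35"
    using simple planar girth5[OF n] count_real[of n] n by simp
qed


end
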